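(* Let $\bar A_1,\bar A_2$ be arrival processes such that $\bar A_i$ is $(\lambda_i,\nu_i)$-constrained for $i=1,2$, with $\lambda_i>0$, $\nu_i\ge 0$. Then their superposition (aggregate process) $\bar A$ is $(\lambda,\nu)$-constrained with $$\lambda=\lambda_1+\lambda_2,\qquad \nu=\nu_1+\nu_2+1.$$
   Context: An arrival process is described by its arrival time function: a nondecreasing sequence $(\bar A(n))_{n\ge 1}$ of nonnegative real numbers, where $\bar A(n)$ is the arrival time of packet $n$. By convention $\bar A(0)=0$, and $\bar A(m,n):=\bar A(n)-\bar A(m)$ for integers $n\ge m\ge 0$. Write $x^+=\max\{x,0\}$. For constants $\lambda>0$ and $\nu\ge 0$, the process is called $(\lambda,\nu)$-constrained if $\bar A(m,n)\ge \frac{1}{\lambda}(n-m-\nu)^+$ for all integers $n\ge m\ge 0$. The superposition (aggregate) of arrival processes $\bar A_1,\dots,\bar A_I$ (each with $\bar A_i(0)=0$) is the arrival process $\bar A$ given by $\bar A(n)=\inf\{\max_{1\le i\le I}\bar A_i(m_i): m_1,\dots,m_I\ge 0 \text{ integers},\ m_1+\cdots+m_I=n\}$ for $n\ge 0$; equivalently, $\bar A(n)$ is the $n$-th smallest element (counted with multiplicity) of the multiset of all packet arrival times $\{\bar A_i(k): 1\le i\le I,\ k\ge 1\}$. *)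

theory Defs
  imports Complex_Main
begin

text \<open>An arrival time function: nondecreasing sequence of nonnegative reals,
  indexed by packet number, with the convention A 0 = 0.\<close>
definition arrival_process :: "(nat \<Rightarrow> real) \<Rightarrow> bool" where
  "arrival_process A \<longleftrightarrow> A 0 = 0 \<and> mono A \<and> (\<forall>n. 0 \<le> A n)"

definition arr_incr :: "(nat \<Rightarrow> real) \<Rightarrow> nat \<Rightarrow> nat \<Rightarrow> real" where
  "arr_incr A m n = A n - A m"

definition constrained :: "real \<Rightarrow> real \<Rightarrow> (nat \<Rightarrow> real) \<Rightarrow> bool" where
  "constrained lam nu A \<longleftrightarrow>
     (\<forall>m n. m \<le> n \<longrightarrow> arr_incr A m n \<ge> (1 / lam) * max (real n - real m - nu) 0)"

text \<open>Superposition of two arrival processes (the case I = 2 of the general definition).\<close>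
definition superpos2 :: "(nat \<Rightarrow> real) \<Rightarrow> (nat \<Rightarrow> real) \<Rightarrow> nat \<Rightarrow> real" where
  "superpos2 A1 A2 n = Inf {max (A1 m1) (A2 m2) | m1 m2. m1 + m2 = n}"

end

theory Submission
  imports Defs
begin

lemma S_char:
  "superpos2 A1 A2 n = Min ((\<lambda>k. max (A1 k) (A2 (n-k))) ` {..n})"
proof -
  have "{max (A1 m1) (A2 m2) | m1 m2. m1 + m2 = n} = (\<lambda>k. max (A1 k) (A2 (n-k))) ` {..n}"
  proof (rule set_eqI, rule iffI)
    fix x assume "x \<in> {max (A1 m1) (A2 m2) | m1 m2. m1 + m2 = n}"
    then obtain m1 m2 where "x = max (A1 m1) (A2 m2)" "m1 + m2 = n" by blast
    then show "x \<in> (\<lambda>k. max (A1 k) (A2 (n-k))) ` {..n}"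
      by (intro image_eqI[of _ _ m1]) auto
  next
    fix x assume "x \<in> (\<lambda>k. max (A1 k) (A2 (n-k))) ` {..n}"
    then obtain k where "k \<le> n" "x = max (A1 k) (A2 (n-k))" by auto
    then show "x \<in> {max (A1 m1) (A2 m2) | m1 m2. m1 + m2 = n}" by force
  qed
  then show ?thesis unfolding superpos2_def
    by (simp add: cInf_eq_Min)
qed

lemma S_attain: "\<exists>k\<le>n. superpos2 A1 A2 n = max (A1 k) (A2 (n-k))"
proof -
  have "Min ((\<lambda>k. max (A1 k) (A2 (n-k))) ` {..n}) \<in> (\<lambda>k. max (A1 k) (A2 (n-k))) ` {..n}"
    by (rule Min_in) auto
  then obtain k where "k \<le> n" "Min ((\<lambda>k. max (A1 k) (A2 (n-k))) ` {..n}) = max (A1 k) (A2 (n-k))"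
    by blast
  then show ?thesis unfolding S_char by blast
qed

lemma S_le: "k \<le> n \<Longrightarrow> superpos2 A1 A2 n \<le> max (A1 k) (A2 (n-k))"
  unfolding S_char by (rule Min_le) auto

lemma constr0:
  assumes "arrival_process A" "lam > 0" "constrained lam nu A"
  shows "lam * A a \<ge> real a - nu"
proof -
  have "arr_incr A 0 a \<ge> (1/lam) * max (real a - real 0 - nu) 0"
    using assms(3) unfolding constrained_def by blast
  then have "A a \<ge> (1/lam) * max (real a - nu) 0"
    using assms(1) by (simp add: arr_incr_def arrival_process_def)
  then have "lam * A a \<ge> max (real a - nu) 0"
    using assms(2) by (simp add: field_simps)
  then show ?thesis by linarith
qed

lemma c_exists:
  assumes "arrival_process A" "lam > 0" "constrained lam nu A" "t > 0"
  shows "\<exists>c. A c < t \<and> (\<forall>k. A k < t \<longrightarrow> k \<le> c)"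
proof -
  let ?S = "{k. A k < t}"
  have sub: "?S \<subseteq> {..nat \<lceil>lam * t + nu\<rceil>}"
  proof
    fix k assume "k \<in> ?S"
    then have "A k < t" by simp
    moreover have "lam * A k \<ge> real k - nu" using constr0[OF assms(1-3)] .
    ultimately have "real k < lam * t + nu"
      using assms(2) by (smt (verit) mult_strict_left_mono)
    then show "k \<in> {..nat \<lceil>lam * t + nu\<rceil>}" by (simp, linarith)
  qed
  have fin: "finite ?S" using finite_subset[OF sub] by simp
  have "0 \<in> ?S" using assms(1,4) by (simp add: arrival_process_def)
  then have ne: "?S \<noteq> {}" by blast
  have "Max ?S \<in> ?S" using Max_in[OF fin ne] .
  moreover have "\<forall>k. A k < t \<longrightarrow> k \<le> Max ?S" using Max_ge[OF fin] by simp
  ultimately show ?thesis by blast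
qed

lemma proc_bound:
  assumes "arrival_process A" "lam > 0" "constrained lam nu A"
    and "\<forall>k. A k < t \<longrightarrow> k \<le> c" "A a \<le> T" "c + 1 \<le> a"
  shows "T - t \<ge> 0 \<and> lam * (T - t) \<ge> real a - real c - 1 - nu"
proof -
  have mono: "mono A" using assms(1) by (simp add: arrival_process_def)
  have ge: "A (c+1) \<ge> t" using assms(4) by (metis not_less Suc_eq_plus1 Suc_n_not_le_n)
  have "arr_incr A (c+1) a \<ge> (1/lam) * max (real a - real (c+1) - nu) 0"
    using assms(3,6) unfolding constrained_def by blast
  then have h: "lam * (A a - A (c+1)) \<ge> max (real a - real (c+1) - nu) 0"
    using assms(2) by (simp add: arr_incr_def field_simps)
  have "A (c+1) \<le> A a" using mono assms(6) by (simp add: monoD)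
  then have "T - t \<ge> A a - A (c+1)" "A a - A (c+1) \<ge> 0" using ge assms(5) by linarith+
  moreover have "lam * (T - t) \<ge> lam * (A a - A (c+1))"
    using calculation assms(2) by simp
  ultimately show ?thesis using h by auto
qed

theorem lemma5:
  fixes A1 A2 :: "nat \<Rightarrow> real" and lam1 lam2 nu1 nu2 :: real
  assumes "arrival_process A1" and "arrival_process A2"
    and "lam1 > 0" and "lam2 > 0" and "nu1 \<ge> 0" and "nu2 \<ge> 0"
    and "constrained lam1 nu1 A1" and "constrained lam2 nu2 A2"
  shows "constrained (lam1 + lam2) (nu1 + nu2 + 1) (superpos2 A1 A2)"
  unfolding constrained_def arr_incr_def
proof (intro allI impI)
  fix m n :: nat assume mn: "m \<le> n"
  define t where "t = superpos2 A1 A2 m"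
  define T where "T = superpos2 A1 A2 n"
  obtain a where a: "a \<le> n" "T = max (A1 a) (A2 (n-a))"
    using S_attain T_def by blast
  have p1: "A1 a \<le> T" and p2: "A2 (n-a) \<le> T" using a by auto
  obtain b where b: "b \<le> m" "t = max (A1 b) (A2 (m-b))"
    using S_attain t_def by blast
  have tnn: "t \<ge> 0" using b assms(1,2) unfolding arrival_process_def by (smt (verit))
  have key: "T - t \<ge> 0 \<and> (lam1 + lam2) * (T - t) \<ge> real n - real m - (nu1 + nu2 + 1)"
  proof (cases "t > 0")
    case False
    then have t0: "t = 0" using tnn by simp
    have "lam1 * A1 a \<ge> real a - nu1" using constr0[OF assms(1,3,7)] .
    moreover have "lam2 * A2 (n-a) \<ge> real (n-a) - nu2" using constr0[OF assms(2,4,8)] .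
    moreover have "lam1 * T \<ge> lam1 * A1 a" using p1 assms(3) by simp
    moreover have "lam2 * T \<ge> lam2 * A2 (n-a)" using p2 assms(4) by simp
    moreover have "T \<ge> 0" using p1 assms(1) by (smt (verit) arrival_process_def)
    moreover have "real (n-a) = real n - real a" using a by simp
    ultimately show ?thesis using t0 by (simp add: algebra_simps)
  next
    case True
    obtain c1 where c1: "A1 c1 < t" "\<forall>k. A1 k < t \<longrightarrow> k \<le> c1"
      using c_exists[OF assms(1,3,7) True] by blast
    obtain c2 where c2: "A2 c2 < t" "\<forall>k. A2 k < t \<longrightarrow> k \<le> c2"
      using c_exists[OF assms(2,4,8) True] by blast
    have cm: "c1 + c2 < m"
    proof (rule ccontr)
      assume "\<not> c1 + c2 < m"
      define x where "x = min c1 m"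
      have "x \<le> m" by (simp add: x_def)
      then have "t \<le> max (A1 x) (A2 (m-x))" using S_le t_def by blast
      moreover have "A1 x \<le> A1 c1" using assms(1) by (simp add: arrival_process_def monoD x_def)
      moreover have "A2 (m-x) \<le> A2 c2" using assms(1,2) \<open>\<not> c1 + c2 < m\<close>
        by (simp add: arrival_process_def monoD x_def)
      ultimately show False using c1 c2 by linarith
    qed
    have q1: "c1 + 1 \<le> a \<Longrightarrow> T - t \<ge> 0 \<and> lam1 * (T - t) \<ge> real a - real c1 - 1 - nu1"
      using proc_bound[OF assms(1,3,7) c1(2) p1] by blast
    have q2: "c2 + 1 \<le> n - a \<Longrightarrow> T - t \<ge> 0 \<and> lam2 * (T - t) \<ge> real (n-a) - real c2 - 1 - nu2"
      using proc_bound[OF assms(2,4,8) c2(2) p2] by blast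
    have d: "T - t \<ge> 0" using q1 q2 cm mn a by linarith
    have r1: "lam1 * (T - t) \<ge> real a - real c1 - 1 - nu1"
    proof (cases "c1 + 1 \<le> a")
      case True then show ?thesis using q1 by blast
    next
      case False
      have "lam1 * (T - t) \<ge> 0" using d assms(3) by simp
      then show ?thesis using False assms(5) by linarith
    qed
    have r2: "lam2 * (T - t) \<ge> real (n-a) - real c2 - 1 - nu2"
    proof (cases "c2 + 1 \<le> n - a")
      case True then show ?thesis using q2 by blast
    next
      case False
      have "lam2 * (T - t) \<ge> 0" using d assms(4) by simp
      then show ?thesis using False assms(6) by linarith
    qed
    have "real (n-a) = real n - real a" using a by simp
    then show ?thesis using d r1 r2 cm by (simp add: algebra_simps)
  qed
  have lp: "lam1 + lam2 > 0" using assms(3,4) by simp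
  have "max (real n - real m - (nu1 + nu2 + 1)) 0 \<le> (lam1 + lam2) * (T - t)"
    using key lp by (simp add: max_def)
  then show "(1 / (lam1 + lam2)) * max (real n - real m - (nu1 + nu2 + 1)) 0
        \<le> superpos2 A1 A2 n - superpos2 A1 A2 m"
    using lp unfolding t_def[symmetric] T_def[symmetric] by (simp add: field_simps)
qed

end
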